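(* Let $n\le -1$ be an odd integer. Then $$q_n(w)=\frac{p_n(v)\,p_{6-n}(v)}{v^{2-n}}\qquad\text{where } w=2-\frac{(v+1)(v+2)}{v},$$ as an identity of rational functions in $v$.
   Context: Define polynomials $p_n\in\mathbb{Z}[v]$ for odd $n$ as follows. For odd $n\le -1$: $p_{-1}=v^3+2v^2+v+1$, $p_{-3}=-(v^5+3v^4+4v^3+5v^2+4v+2)$, and $p_n=-\big((v^2+v+2)p_{n+2}+v^2p_{n+4}\big)$ for odd $n<-3$. For odd $n\ge 7$: $p_7=-(v^3+2v^2+8v+8)$, $p_9=v^5+4v^4+10v^3+16v^2+24v+16$, and $p_n=-\big((v^2+v+2)p_{n-2}+v^2p_{n-4}\big)$ for odd $n>9$. Define $q_n\in\mathbb{Z}[w]$ for odd $n\le -1$ by $q_{-1}=w^3-w^2+2w-7$, $q_{-3}=w^5-2w^4-2w^3+5w^2+3w-9$, $q_{-5}=w^7-2w^6-4w^5+8w^4+4w^3-7w^2+2w-7$, and $q_n=(w^2-1)(q_{n+2}-q_{n+4})+q_{n+6}$ for odd $n<-5$. *)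

theory Defs
  imports "HOL-Computational_Algebra.Polynomial"
begin

text \<open>pneg k = p_{-(2k+1)}, for k = 0,1,2,...\<close>
fun pneg :: "nat \<Rightarrow> int poly" where
  "pneg 0 = [:1, 1, 2, 1:]"
| "pneg (Suc 0) = - [:2, 4, 5, 4, 3, 1:]"
| "pneg (Suc (Suc k)) = - ([:2, 1, 1:] * pneg (Suc k) + [:0, 0, 1:] * pneg k)"

text \<open>ppos k = p_{2k+7}, for k = 0,1,2,...\<close>
fun ppos :: "nat \<Rightarrow> int poly" where
  "ppos 0 = - [:8, 8, 2, 1:]"
| "ppos (Suc 0) = [:16, 24, 16, 10, 4, 1:]"
| "ppos (Suc (Suc k)) = - ([:2, 1, 1:] * ppos (Suc k) + [:0, 0, 1:] * ppos k)"

text \<open>p_n for odd n with n \<le> -1 or n \<ge> 7 (value 0 elsewhere, never used)\<close>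
definition p :: "int \<Rightarrow> int poly" where
  "p n = (if odd n \<and> n \<le> -1 then pneg (nat ((- n - 1) div 2))
          else if odd n \<and> 7 \<le> n then ppos (nat ((n - 7) div 2))
          else 0)"

text \<open>qneg k = q_{-(2k+1)}, in the variable w\<close>
fun qneg :: "nat \<Rightarrow> int poly" where
  "qneg 0 = [:-7, 2, -1, 1:]"
| "qneg (Suc 0) = [:-9, 3, 5, -2, -2, 1:]"
| "qneg (Suc (Suc 0)) = [:-7, 2, -7, 4, 8, -4, -2, 1:]"
| "qneg (Suc (Suc (Suc k))) =
     [:-1, 0, 1:] * (qneg (Suc (Suc k)) - qneg (Suc k)) + qneg k"

definition q :: "int \<Rightarrow> int poly" where
  "q n = (if odd n \<and> n \<le> -1 then qneg (nat ((- n - 1) div 2)) else 0)"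

end

theory Submission
  imports Defs
begin

lemma prod_rec:
  fixes v a0 a1 b0 b1 :: "'a :: field_char_0"
  assumes v: "v \<noteq> 0"
  defines "c \<equiv> v^2 + v + 2"
  defines "a2 \<equiv> -(c*a1 + v^2*a0)" and "b2 \<equiv> -(c*b1 + v^2*b0)"
  defines "a3 \<equiv> -(c*a2 + v^2*a1)" and "b3 \<equiv> -(c*b2 + v^2*b1)"
  defines "w \<equiv> 2 - (v + 1) * (v + 2) / v"
  shows "a3*b3 / v^(m+6) = (w^2-1) * (a2*b2/v^(m+4) - a1*b1/v^(m+2)) + a0*b0/v^m"
proof -
  have w: "w = - c / v" using v unfolding w_def c_def by (simp add: field_simps power2_eq_square)
  have key: "a3*b3 = (c^2 - v^2) * (a2*b2 - v^2*a1*b1) + v^6*a0*b0"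
    unfolding a3_def b3_def a2_def b2_def by algebra
  have ww: "(w^2-1) = (c^2 - v^2)/v^2" using v w by (simp add: field_simps power2_eq_square)
  show ?thesis unfolding ww key using v
    by (simp add: field_simps power_add power2_eq_square) algebra
qed

lemma mi_add: "(map_poly (of_int :: int \<Rightarrow> 'a::comm_ring_1)) (x + y) = map_poly of_int x + map_poly of_int y"
  by (simp add: poly_eq_iff coeff_map_poly)
lemma mi_minus: "(map_poly (of_int :: int \<Rightarrow> 'a::comm_ring_1)) (x - y) = map_poly of_int x - map_poly of_int y"
  by (simp add: poly_eq_iff coeff_map_poly)
lemma mi_uminus: "(map_poly (of_int :: int \<Rightarrow> 'a::comm_ring_1)) (- x) = - map_poly of_int x"
  by (simp add: poly_eq_iff coeff_map_poly)
lemma mi_mult: "(map_poly (of_int :: int \<Rightarrow> 'a::comm_ring_1)) (x * y) = map_poly of_int x * map_poly of_int y"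
  by (simp add: poly_eq_iff coeff_map_poly coeff_mult)

lemma pe_add: "poly (map_poly (of_int :: int \<Rightarrow> 'a::comm_ring_1) (x + y)) v = poly (map_poly of_int x) v + poly (map_poly of_int y) v"
  by (simp add: mi_add)
lemma pe_minus: "poly (map_poly (of_int :: int \<Rightarrow> 'a::comm_ring_1) (x - y)) v = poly (map_poly of_int x) v - poly (map_poly of_int y) v"
  by (simp add: mi_minus)
lemma pe_uminus: "poly (map_poly (of_int :: int \<Rightarrow> 'a::comm_ring_1) (- x)) v = - poly (map_poly of_int x) v"
  by (simp add: mi_uminus)
lemma pe_mult: "poly (map_poly (of_int :: int \<Rightarrow> 'a::comm_ring_1) (x * y)) v = poly (map_poly of_int x) v * poly (map_poly of_int y) v"
  by (simp add: mi_mult)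

definition A :: "'a::field_char_0 \<Rightarrow> nat \<Rightarrow> 'a" where
  "A v k = poly (map_poly of_int (pneg k)) v"
definition B :: "'a::field_char_0 \<Rightarrow> nat \<Rightarrow> 'a" where
  "B v k = poly (map_poly of_int (ppos k)) v"
definition Q :: "'a::field_char_0 \<Rightarrow> nat \<Rightarrow> 'a" where
  "Q w k = poly (map_poly of_int (qneg k)) w"

lemma A_rec: "A v (Suc (Suc k)) = -((v^2+v+2) * A v (Suc k) + v^2 * A v k)"
  unfolding A_def pneg.simps pe_add pe_mult pe_uminus by (simp add: A_def mi_add mi_mult mi_uminus map_poly_pCons
      algebra_simps power2_eq_square)
lemma B_rec: "B v (Suc (Suc k)) = -((v^2+v+2) * B v (Suc k) + v^2 * B v k)"
  unfolding B_def ppos.simps pe_add pe_mult pe_uminus by (simp add: B_def mi_add mi_mult mi_uminus map_poly_pCons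
      algebra_simps power2_eq_square)
lemma Q_rec: "Q w (Suc (Suc (Suc k))) = (w^2-1) * (Q w (Suc (Suc k)) - Q w (Suc k)) + Q w k"
  unfolding Q_def qneg.simps pe_add pe_mult pe_minus by (simp add: Q_def mi_add mi_mult mi_minus map_poly_pCons
      algebra_simps power2_eq_square)

lemma A0: "A v 0 = 1 + v + 2*v^2 + v^3" by (simp add: A_def map_poly_pCons algebra_simps power2_eq_square power3_eq_cube)
lemma A1: "A v 1 = -(2+4*v+5*v^2+4*v^3+3*v^4+v^5)" by (simp add: A_def map_poly_pCons algebra_simps power2_eq_square power3_eq_cube power_numeral_reduce)
lemma B0: "B v 0 = -(8 + 8*v+2*v^2+v^3)" by (simp add: B_def map_poly_pCons algebra_simps power2_eq_square power3_eq_cube)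
lemma B1: "B v 1 = 16+24*v+16*v^2+10*v^3+4*v^4+v^5" by (simp add: B_def map_poly_pCons algebra_simps power2_eq_square power3_eq_cube power_numeral_reduce)
lemma Q0: "Q w 0 = w^3 - w^2 + 2*w - 7" by (simp add: Q_def map_poly_pCons algebra_simps power2_eq_square power3_eq_cube)
lemma Q1: "Q w 1 = w^5 - 2*w^4 - 2*w^3 + 5*w^2 + 3*w - 9" by (simp add: Q_def map_poly_pCons algebra_simps power2_eq_square power3_eq_cube power_numeral_reduce)
lemma Q2: "Q w 2 = w^7 - 2*w^6 - 4*w^5 + 8*w^4 + 4*w^3 - 7*w^2 + 2*w - 7" by (simp add: Q_def map_poly_pCons numeral_2_eq_2 algebra_simps power2_eq_square power3_eq_cube power_numeral_reduce)

lemma main: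
  fixes v :: "'a::field_char_0"
  assumes v: "v \<noteq> 0"
  shows "Q (2 - (v + 1) * (v + 2) / v) k = A v k * B v k / v^(2*k+3)"
proof -
  define w where "w = 2 - (v + 1) * (v + 2) / v"
  have wv: "w = - (v^2+v+2) / v" unfolding w_def using v by (simp add: field_simps power2_eq_square)
  have A2: "A v 2 = -((v^2+v+2) * A v 1 + v^2 * A v 0)" using A_rec[of v 0] by (simp add: numeral_2_eq_2)
  have B2: "B v 2 = -((v^2+v+2) * B v 1 + v^2 * B v 0)" using B_rec[of v 0] by (simp add: numeral_2_eq_2)
  have b0: "Q w 0 * v^3 = A v 0 * B v 0" unfolding Q0 A0 B0 using v wv by (simp add: field_simps power_divide) algebra
  have b1: "Q w 1 * v^5 = A v 1 * B v 1" unfolding Q1 A1 B1 using v wv by (simp add: field_simps power_divide) algebra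
  have b2: "Q w 2 * v^7 = A v 2 * B v 2" unfolding Q2 A2 B2 A1 B1 A0 B0 using v wv by (simp add: field_simps power_divide) algebra
  have "Q w k = A v k * B v k / v^(2*k+3)"
  proof (induction k rule: qneg.induct)
    case 1
    then show ?case using b0 v by (simp add: eq_divide_eq)
  next
    case 2
    then show ?case using b1 v by (simp add: eq_divide_eq)
  next
    case 3
    then show ?case using b2 v by (simp add: eq_divide_eq numeral_2_eq_2)
  next
    case (4 k)
    have "Q w (Suc (Suc (Suc k))) = (w^2-1) *
       (A v (Suc (Suc k)) * B v (Suc (Suc k)) / v^(2*k+3+4) - A v (Suc k) * B v (Suc k) / v^(2*k+3+2))
       + A v k * B v k / v^(2*k+3)"
    proof -
      have e: "2*Suc(Suc k)+3 = 2*k+3+4" "2*Suc k+3=2*k+3+2" by simp_all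
      show ?thesis unfolding Q_rec 4 e ..
    qed
    also have "\<dots> = A v (Suc (Suc (Suc k))) * B v (Suc (Suc (Suc k))) / v^(2*k+3+6)"
      unfolding A_rec[of v "Suc k"] A_rec[of v k] B_rec[of v "Suc k"] B_rec[of v k] w_def
      by (rule prod_rec[OF v, THEN sym])
    also have "2*k+3+6 = 2*Suc(Suc(Suc k))+3" by simp
    finally show ?case .
  qed
  then show ?thesis unfolding w_def .
qed

theorem lemma3p1:
  fixes n :: int and v :: "'a :: field_char_0"
  assumes "odd n" and "n \<le> -1" and "v \<noteq> 0"
  shows "poly (map_poly of_int (q n)) (2 - (v + 1) * (v + 2) / v)
         = poly (map_poly of_int (p n)) v * poly (map_poly of_int (p (6 - n))) v / v ^ nat (2 - n)"
proof -
  define k where "k = nat ((- n - 1) div 2)"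
  have k: "n = - (2 * int k + 1)"
  proof -
    obtain b where b: "n = 2*b+1" using assms(1) by (elim oddE)
    have "(- n - 1) div 2 = -b-1" unfolding b by simp
    moreover have "-b-1 \<ge> 0" using assms(2) b by simp
    ultimately show ?thesis unfolding k_def using b by simp
  qed
  have e1: "nat ((- n - 1) div 2) = k" using k by simp
  have e2: "nat ((6 - n - 7) div 2) = k" using k by simp
  have e3: "nat (2 - n) = 2*k+3" using k by simp
  have "q n = qneg k" "p n = pneg k" "p (6-n) = ppos k"
    using assms e1 e2 k unfolding q_def p_def by auto
  then show ?thesis using main[OF assms(3), of k] e3 by (simp add: A_def B_def Q_def)
qed

end
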